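(* Let $L$ be an interval locale. If $F$ is a presheaf of monomorphisms on $L_{+}$, then $LF$ is a sheaf of monomorphisms on $L_{+}$. Consequently the associated sheaf functor $L^2:\mathbf{Pre}(L_{+})\to\mathbf{Shv}(L_{+})$ restricts to a functor $\mathbf{Mon}_p(L_{+})\to\mathbf{Mon}(L_{+})$ (which agrees with $L$ on these objects).
   Context: A locale $L$ is a complete lattice in which finite meets distribute over arbitrary joins, with Grothendieck topology: $\{b_j\le a\}$ covers $a$ iff $\bigvee_j b_j=a$; sheaves are presheaves $F$ with $F(a)\to\varprojlim_{b\in R}F(b)$ bijective for all covering sieves $R$. $L$ is an interval if it is totally ordered and densely ordered ($a<b$ implies there is $s$ with $a<s<b$). $i$ is the bottom element of $L$; $L_{+}=L\sqcup\{0\}$ with a new bottom $0<i$. A presheaf of monomorphisms on $L_{+}$ is a functor $F:(L_{+})^{op}\to\mathbf{Set}$ with $F(0)=\ast$ and $F(b)\to F(a)$ injective for all $a\le b$ in $L$; these form $\mathbf{Mon}_p(L_{+})$. A sheaf of monomorphisms is a sheaf with this property; they form $\mathbf{Mon}(L_{+})$. For a presheaf $F$ on $L_{+}$, $LF(a)=\varprojlim_{0<b<a}F(b)$ for $a\in L$, $a\ne i$, $LF(i)=F(i)$, $LF(0)=\ast$. *)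

theory Defs
  imports Main "HOL-Library.Option_ord" "HOL-Library.FuncSet"
begin

(* The locale L is modelled by a type 'a :: complete_linorder (a complete chain;
   chains are automatically frames).  L_+ is the type 'a option, ordered by
   Option_ord: None is the new bottom 0, Some x is x in L, and i = Some bot.
   A presheaf on a poset 'p is a family of sets F a together with restriction
   maps r a b : F b -> F a for a <= b (functoriality is required only on the
   relevant sets). *)

definition is_presheaf :: "('p::order \<Rightarrow> 'v set) \<Rightarrow> ('p \<Rightarrow> 'p \<Rightarrow> 'v \<Rightarrow> 'v) \<Rightarrow> bool" where
  "is_presheaf F r \<longleftrightarrow>
     (\<forall>a b x. a \<le> b \<and> x \<in> F b \<longrightarrow> r a b x \<in> F a) \<and>
     (\<forall>a x. x \<in> F a \<longrightarrow> r a a x = x) \<and>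
     (\<forall>a b c x. a \<le> b \<and> b \<le> c \<and> x \<in> F c \<longrightarrow> r a b (r b c x) = r a c x)"

(* The (set-theoretic) limit of F over a subposet I: compatible families,
   represented as extensional functions on I. *)
definition plim :: "'p::order set \<Rightarrow> ('p \<Rightarrow> 'v set) \<Rightarrow> ('p \<Rightarrow> 'p \<Rightarrow> 'v \<Rightarrow> 'v) \<Rightarrow> ('p \<Rightarrow> 'v) set" where
  "plim I F r = {s. s \<in> extensional I \<and> (\<forall>b\<in>I. s b \<in> F b) \<and>
                    (\<forall>b\<in>I. \<forall>c\<in>I. c \<le> b \<longrightarrow> r c b (s b) = s c)}"

definition is_sieve :: "'p::order \<Rightarrow> 'p set \<Rightarrow> bool" where
  "is_sieve a R \<longleftrightarrow> (\<forall>b\<in>R. b \<le> a) \<and> (\<forall>b\<in>R. \<forall>c. c \<le> b \<longrightarrow> c \<in> R)"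

definition is_sheaf :: "('p::complete_lattice \<Rightarrow> 'v set) \<Rightarrow> ('p \<Rightarrow> 'p \<Rightarrow> 'v \<Rightarrow> 'v) \<Rightarrow> bool" where
  "is_sheaf F r \<longleftrightarrow> is_presheaf F r \<and>
     (\<forall>a R. is_sieve a R \<and> Sup R = a \<longrightarrow>
        bij_betw (\<lambda>x. \<lambda>b\<in>R. r b a x) (F a) (plim R F r))"

definition mono_presheaf :: "('a::complete_linorder option \<Rightarrow> 'v set) \<Rightarrow> ('a option \<Rightarrow> 'a option \<Rightarrow> 'v \<Rightarrow> 'v) \<Rightarrow> bool" where
  "mono_presheaf F r \<longleftrightarrow> is_presheaf F r \<and> (\<exists>u. F None = {u}) \<and>
     (\<forall>a b. a \<le> b \<longrightarrow> inj_on (r (Some a) (Some b)) (F (Some b)))"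

definition mono_sheaf :: "('a::complete_linorder option \<Rightarrow> 'v set) \<Rightarrow> ('a option \<Rightarrow> 'a option \<Rightarrow> 'v \<Rightarrow> 'v) \<Rightarrow> bool" where
  "mono_sheaf F r \<longleftrightarrow> is_sheaf F r \<and> mono_presheaf F r"

(* Elements of LF(i) are Inl x with x in F(i);
   elements of LF(a), a <> i, are Inr s with s a compatible family over
   {b. 0 < b < a}; LF(0) is the one-point set (the limit over the empty poset). *)
definition LF :: "('a::complete_linorder option \<Rightarrow> 'v set) \<Rightarrow> ('a option \<Rightarrow> 'a option \<Rightarrow> 'v \<Rightarrow> 'v)
                   \<Rightarrow> 'a option \<Rightarrow> ('v + ('a option \<Rightarrow> 'v)) set" where
  "LF F r a =
     (if a = None then {Inr (\<lambda>_. undefined)}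
      else if a = Some bot then Inl ` F a
      else Inr ` plim {b. None < b \<and> b < a} F r)"

definition Lres :: "'a::complete_linorder option \<Rightarrow> 'a option \<Rightarrow> ('v + ('a option \<Rightarrow> 'v)) \<Rightarrow> ('v + ('a option \<Rightarrow> 'v))" where
  "Lres a b y =
     (if a = None then Inr (\<lambda>_. undefined)
      else if a = Some bot then (case y of Inl x \<Rightarrow> Inl x | Inr s \<Rightarrow> Inl (s (Some bot)))
      else (case y of Inl x \<Rightarrow> Inl x | Inr s \<Rightarrow> Inr (restrict s {c. None < c \<and> c < a})))"

definition presheaf_iso :: "('p::order \<Rightarrow> 'v set) \<Rightarrow> ('p \<Rightarrow> 'p \<Rightarrow> 'v \<Rightarrow> 'v) \<Rightarrow>
                            ('p \<Rightarrow> 'w set) \<Rightarrow> ('p \<Rightarrow> 'p \<Rightarrow> 'w \<Rightarrow> 'w) \<Rightarrow> ('p \<Rightarrow> 'v \<Rightarrow> 'w) \<Rightarrow> bool" where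
  "presheaf_iso F r G s \<phi> \<longleftrightarrow> (\<forall>a. bij_betw (\<phi> a) (F a) (G a)) \<and>
     (\<forall>a b x. a \<le> b \<and> x \<in> F b \<longrightarrow> \<phi> a (r a b x) = s a b (\<phi> b x))"

end

theory Submission
  imports Defs
begin

abbreviation D :: "'a::complete_linorder option \<Rightarrow> 'a option set" where
  "D a \<equiv> {b. None < b \<and> b < a}"

lemma Lres_None[simp]: "Lres None b y = Inr (\<lambda>_. undefined)"
  by (simp add: Lres_def)
lemma Lres_bot_Inr[simp]: "Lres (Some bot) b (Inr s) = Inl (s (Some bot))"
  by (simp add: Lres_def)
lemma Lres_bot_Inl[simp]: "Lres (Some bot) b (Inl v) = Inl v"
  by (simp add: Lres_def)
lemma Lres_gt[simp]: "a \<noteq> None \<Longrightarrow> a \<noteq> Some bot \<Longrightarrow> Lres a b (Inr s) = Inr (restrict s (D a))"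
  by (simp add: Lres_def del: not_None_eq)
lemma LF_None[simp]: "LF F r None = {Inr (\<lambda>_. undefined)}"
  by (simp add: LF_def)
lemma LF_bot[simp]: "LF F r (Some bot) = Inl ` F (Some bot)"
  by (simp add: LF_def)
lemma LF_gt[simp]: "a \<noteq> None \<Longrightarrow> a \<noteq> Some bot \<Longrightarrow> LF F r a = Inr ` plim (D a) F r"
  by (simp add: LF_def del: not_None_eq)

lemma bot_in_D: "a \<noteq> None \<Longrightarrow> a \<noteq> Some (bot::'a::complete_linorder) \<Longrightarrow> Some bot \<in> D a"
  by (cases a) (auto simp: bot.not_eq_extremum)

lemma bot_in_D': "bot < x \<Longrightarrow> Some bot \<in> D (Some (x::'a::complete_linorder))"
  by (metis less_option_None_Some less_option_Some mem_Collect_eq)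

lemma Some_bot_le: "a \<noteq> None \<Longrightarrow> Some (bot::'a::complete_linorder) \<le> a"
  by (cases a) auto

lemma ge_not_bot: "a \<le> b \<Longrightarrow> a \<noteq> None \<Longrightarrow> a \<noteq> Some (bot::'a::complete_linorder) \<Longrightarrow> b \<noteq> None \<and> b \<noteq> Some bot"
  by (cases a; cases b) (auto simp: bot_unique)

lemma D_mono: "a \<le> b \<Longrightarrow> D a \<subseteq> D b"
  by auto

lemma plim_in: "s \<in> plim I F r \<Longrightarrow> b \<in> I \<Longrightarrow> s b \<in> F b"
  unfolding plim_def by blast
lemma plim_compat: "s \<in> plim I F r \<Longrightarrow> b \<in> I \<Longrightarrow> c \<in> I \<Longrightarrow> c \<le> b \<Longrightarrow> r c b (s b) = s c"
  unfolding plim_def by blast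
lemma plim_ext: "s \<in> plim I F r \<Longrightarrow> s \<in> extensional I"
  unfolding plim_def by blast
lemma plimI: "s \<in> extensional I \<Longrightarrow> (\<And>b. b \<in> I \<Longrightarrow> s b \<in> F b) \<Longrightarrow>
   (\<And>b c. b \<in> I \<Longrightarrow> c \<in> I \<Longrightarrow> c \<le> b \<Longrightarrow> r c b (s b) = s c) \<Longrightarrow> s \<in> plim I F r"
  unfolding plim_def by blast

lemma plim_restrict: "s \<in> plim I F r \<Longrightarrow> J \<subseteq> I \<Longrightarrow> restrict s J \<in> plim J F r"
  unfolding plim_def by auto

lemma LF_presheaf: "is_presheaf (LF F r) Lres"
  unfolding is_presheaf_def
proof (intro conjI allI impI)
  fix a b y assume h: "a \<le> b \<and> y \<in> LF F r b"
  show "Lres a b y \<in> LF F r a"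
  proof (cases "a = None")
    case False
    show ?thesis
    proof (cases "a = Some bot")
      case True
      show ?thesis
      proof (cases "b = Some bot")
        case True then show ?thesis using h \<open>a = Some bot\<close> by auto
      next
        case False
        have "b \<noteq> None" using h \<open>a = Some bot\<close> by (cases b) auto
        then obtain s where "y = Inr s" "s \<in> plim (D b) F r" using h False by auto
        then show ?thesis using bot_in_D[OF \<open>b \<noteq> None\<close> False] \<open>a = Some bot\<close>
          unfolding plim_def by auto
      qed
    next
      case False
      have b: "b \<noteq> None" "b \<noteq> Some bot" using ge_not_bot[of a b] h False \<open>a \<noteq> None\<close> by auto
      then obtain s where "y = Inr s" "s \<in> plim (D b) F r" using h by auto
      then show ?thesis using False \<open>a \<noteq> None\<close> h by (auto intro!: plim_restrict)
    qed
  qed simp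
next
  fix a y assume "y \<in> LF F r a"
  then show "Lres a a y = y"
  proof (cases "a = None")
    case False
    show ?thesis
    proof (cases "a = Some bot")
      case False
      then obtain s where "y = Inr s" "s \<in> plim (D a) F r" using \<open>y \<in> LF F r a\<close> \<open>a \<noteq> None\<close> by auto
      then show ?thesis using False \<open>a \<noteq> None\<close> by (auto simp: plim_def extensional_restrict)
    qed (use \<open>y \<in> LF F r a\<close> in auto)
  qed auto
next
  fix a b c y assume h: "a \<le> b \<and> b \<le> c \<and> y \<in> LF F r c"
  show "Lres a b (Lres b c y) = Lres a c y"
  proof (cases "a = None")
    case False
    show ?thesis
    proof (cases "a = Some bot")
      case True
      show ?thesis
      proof (cases "b = Some bot")
        case True then show ?thesis using \<open>a = Some bot\<close> by (auto simp: Lres_def split: sum.split)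
      next
        case False
        have "b \<noteq> None" using h \<open>a = Some bot\<close> by (cases b) auto
        have c: "c \<noteq> None" "c \<noteq> Some bot" using ge_not_bot[of b c] h False \<open>b \<noteq> None\<close> by auto
        then obtain s where "y = Inr s" using h by auto
        then show ?thesis using bot_in_D[OF \<open>b \<noteq> None\<close> False] \<open>a = Some bot\<close> False \<open>b \<noteq> None\<close> c
          by auto
      qed
    next
      case False
      have b: "b \<noteq> None" "b \<noteq> Some bot" using ge_not_bot[of a b] h False \<open>a \<noteq> None\<close> by auto
      have c: "c \<noteq> None" "c \<noteq> Some bot" using ge_not_bot[of b c] h b by auto
      then obtain s where "y = Inr s" using h by auto
      have DD: "D b \<inter> D a = D a" using h by (auto intro: less_le_trans)
      have "Lres a b (Lres b c y) = Inr (restrict (restrict s (D b)) (D a))"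
        using \<open>y = Inr s\<close> False \<open>a \<noteq> None\<close> b c by (simp del: not_None_eq)
      also have "\<dots> = Inr (restrict s (D a))" by (simp add: DD del: not_None_eq)
      also have "\<dots> = Lres a c y"
        using \<open>y = Inr s\<close> False \<open>a \<noteq> None\<close> by (simp del: not_None_eq)
      finally show ?thesis .
    qed
  qed simp
qed

lemma ps_in: "is_presheaf G \<rho> \<Longrightarrow> a \<le> b \<Longrightarrow> x \<in> G b \<Longrightarrow> \<rho> a b x \<in> G a"
  unfolding is_presheaf_def by blast
lemma ps_id: "is_presheaf G \<rho> \<Longrightarrow> x \<in> G a \<Longrightarrow> \<rho> a a x = x"
  unfolding is_presheaf_def by blast
lemma ps_comp: "is_presheaf G \<rho> \<Longrightarrow> a \<le> b \<Longrightarrow> b \<le> c \<Longrightarrow> x \<in> G c \<Longrightarrow> \<rho> a b (\<rho> b c x) = \<rho> a c x"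
  unfolding is_presheaf_def by blast

lemma LF_mono:
  assumes mono: "mono_presheaf F r"
  shows "mono_presheaf (LF F r) Lres"
  unfolding mono_presheaf_def
proof (intro conjI allI impI)
  show "is_presheaf (LF F r) Lres" by (rule LF_presheaf)
  show "\<exists>u. LF F r None = {u}" by simp
  fix a b :: 'a assume ab: "a \<le> b"
  show "inj_on (Lres (Some a) (Some b)) (LF F r (Some b))"
  proof (cases "a = b")
    case True
    have "\<And>x. x \<in> LF F r (Some b) \<Longrightarrow> Lres (Some b) (Some b) x = x"
      using ps_id[OF LF_presheaf] by blast
    then show ?thesis using True by (simp add: inj_on_def)
  next
    case False
    then have ab2: "a < b" using ab by simp
    then have bb: "b \<noteq> bot" using bot.not_eq_extremum by fastforce
    have injF: "\<And>z. inj_on (r (Some bot) (Some z)) (F (Some z))"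
      using mono bot_least unfolding mono_presheaf_def by blast
    show ?thesis
    proof (rule inj_onI)
      fix x y assume x: "x \<in> LF F r (Some b)" and y: "y \<in> LF F r (Some b)"
        and eq: "Lres (Some a) (Some b) x = Lres (Some a) (Some b) y"
      have LFb: "LF F r (Some b) = Inr ` plim (D (Some b)) F r" using bb by simp
      obtain s1 where s1: "x = Inr s1" "s1 \<in> plim (D (Some b)) F r" using x unfolding LFb by blast
      obtain s2 where s2: "y = Inr s2" "s2 \<in> plim (D (Some b)) F r" using y unfolding LFb by blast
      have "bot < b" using bb bot.not_eq_extremum by blast
      then have botD: "Some bot \<in> D (Some b)" by (rule bot_in_D')
      have e0: "s1 (Some bot) = s2 (Some bot)"
      proof (cases "a = bot")
        case True
        from eq show ?thesis unfolding s1(1) s2(1) True Lres_bot_Inr by simp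
      next
        case False
        have ne: "Some a \<noteq> None" "Some a \<noteq> Some bot" using False by simp_all
        from eq have RR: "restrict s1 (D (Some a)) = restrict s2 (D (Some a))"
          unfolding s1(1) s2(1) Lres_gt[OF ne] by simp
        have "bot < a" using False bot.not_eq_extremum by blast
        then have "Some bot \<in> D (Some a)" by (rule bot_in_D')
        moreover have "restrict s1 (D (Some a)) (Some bot) = restrict s2 (D (Some a)) (Some bot)"
          using RR by (rule arg_cong)
        ultimately show ?thesis by (simp only: restrict_apply')
      qed
      have "s1 = s2"
      proof (rule extensionalityI)
        show "s1 \<in> extensional (D (Some b))" "s2 \<in> extensional (D (Some b))"
          using s1(2) s2(2) by (simp_all add: plim_ext)
        fix c assume c: "c \<in> D (Some b)"
        then obtain z where z: "c = Some z" using less_option_None_is_Some by blast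
        have bc: "Some bot \<le> c" using z by simp
        have "r (Some bot) c (s1 c) = s1 (Some bot)" "r (Some bot) c (s2 c) = s2 (Some bot)"
          using plim_compat[OF s1(2) c botD bc] plim_compat[OF s2(2) c botD bc] by auto
        moreover have "s1 c \<in> F c" "s2 c \<in> F c" using plim_in[OF s1(2) c] plim_in[OF s2(2) c] by auto
        ultimately show "s1 c = s2 c" using inj_onD[OF injF[of z]] z e0 by simp
      qed
      then show "x = y" using s1 s2 by simp
    qed
  qed
qed

lemma into_plim:
  assumes "is_presheaf G \<rho>" "\<forall>c\<in>R. c \<le> a" "x \<in> G a"
  shows "(\<lambda>c\<in>R. \<rho> c a x) \<in> plim R G \<rho>"
  using assms ps_in[OF assms(1)] ps_comp[OF assms(1)] by (intro plimI) auto

lemma sheaf_top: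
  assumes P: "is_presheaf G \<rho>" and S: "is_sieve a R" and aR: "a \<in> R"
  shows "bij_betw (\<lambda>x. \<lambda>b\<in>R. \<rho> b a x) (G a) (plim R G \<rho>)"
  unfolding bij_betw_def
proof (intro conjI)
  show "inj_on (\<lambda>x. \<lambda>b\<in>R. \<rho> b a x) (G a)"
  proof (rule inj_onI)
    fix x y assume "x \<in> G a" "y \<in> G a" "(\<lambda>b\<in>R. \<rho> b a x) = (\<lambda>b\<in>R. \<rho> b a y)"
    then have "(\<lambda>b\<in>R. \<rho> b a x) a = (\<lambda>b\<in>R. \<rho> b a y) a" by (simp only:)
    then have "\<rho> a a x = \<rho> a a y" using aR by simp
    then show "x = y" using ps_id[OF P \<open>x \<in> G a\<close>] ps_id[OF P \<open>y \<in> G a\<close>] by simp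
  qed
  show "(\<lambda>x. \<lambda>b\<in>R. \<rho> b a x) ` G a = plim R G \<rho>"
  proof
    show "(\<lambda>x. \<lambda>b\<in>R. \<rho> b a x) ` G a \<subseteq> plim R G \<rho>"
      using into_plim[OF P] S unfolding is_sieve_def by blast
    show "plim R G \<rho> \<subseteq> (\<lambda>x. \<lambda>b\<in>R. \<rho> b a x) ` G a"
    proof
      fix t assume t: "t \<in> plim R G \<rho>"
      have "t a \<in> G a" using plim_in[OF t aR] .
      moreover have "t = (\<lambda>b\<in>R. \<rho> b a (t a))"
      proof (rule extensionalityI)
        show "t \<in> extensional R" using plim_ext[OF t] .
        show "(\<lambda>b\<in>R. \<rho> b a (t a)) \<in> extensional R" by simp
        fix b assume "b \<in> R"
        then have "b \<le> a" using S by (simp add: is_sieve_def)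
        then have "\<rho> b a (t a) = t b" using plim_compat[OF t aR \<open>b \<in> R\<close>] by simp
        then show "t b = (\<lambda>b\<in>R. \<rho> b a (t a)) b" using \<open>b \<in> R\<close> by simp
      qed
      ultimately show "t \<in> (\<lambda>x. \<lambda>b\<in>R. \<rho> b a x) ` G a" by blast
    qed
  qed
qed


lemma D_not_None: "c \<in> D a \<Longrightarrow> c \<noteq> None"
  by (cases c) auto

lemma not_None_less: "c \<noteq> None \<Longrightarrow> None < c"
  by (cases c) simp_all

lemma exists_between:
  assumes dense: "\<forall>x y::'a::complete_linorder. x < y \<longrightarrow> (\<exists>z. x < z \<and> z < y)"
    and b: "b \<in> D (a::'a option)"
  shows "\<exists>c. c \<in> D a \<and> b < c"
proof -
  have b1: "None < b" "b < a" using b by auto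
  obtain y where y: "b = Some y" using less_option_None_is_Some[OF b1(1)] by blast
  have "None < a" using b1 by (rule less_trans)
  then obtain x where x: "a = Some x" using less_option_None_is_Some by blast
  have "y < x" using b1(2) x y by simp
  then obtain z where z: "y < z" "z < x" using dense by blast
  have "Some z \<in> D a" using z x by simp
  moreover have "b < Some z" using z y by simp
  ultimately show ?thesis by blast
qed

lemma D_gt_bot:
  assumes b: "b \<in> D a" and bc: "b < c"
  shows "c \<noteq> None" "c \<noteq> Some (bot::'a::complete_linorder)"
proof -
  have "b \<noteq> None" using b by (rule D_not_None)
  then have "Some bot \<le> b" by (rule Some_bot_le)
  then have "Some bot < c" using bc by (rule le_less_trans)
  then show "c \<noteq> None" by (cases c) auto
  show "c \<noteq> Some bot" using \<open>Some bot < c\<close> by auto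
qed

lemma glue:
  fixes F :: "'a::complete_linorder option \<Rightarrow> 'v set" and r
  assumes dense: "\<forall>x y::'a. x < y \<longrightarrow> (\<exists>z. x < z \<and> z < y)"
    and a1: "a \<noteq> None" "a \<noteq> Some bot" and R1: "D a \<subseteq> R" and R2: "R \<subseteq> {c. c < a}"
  shows "bij_betw (\<lambda>x. \<lambda>b\<in>R. Lres b a x) (LF F r a) (plim R (LF F r) Lres)"
  unfolding bij_betw_def
proof (intro conjI)
  have LFa: "LF F r a = Inr ` plim (D a) F r" using LF_gt[OF a1] .
  show "inj_on (\<lambda>x. \<lambda>b\<in>R. Lres b a x) (LF F r a)"
  proof (rule inj_onI)
    fix x y assume x: "x \<in> LF F r a" and y: "y \<in> LF F r a"
      and eq: "(\<lambda>b\<in>R. Lres b a x) = (\<lambda>b\<in>R. Lres b a y)"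
    obtain s1 where s1: "x = Inr s1" "s1 \<in> plim (D a) F r" using x unfolding LFa by blast
    obtain s2 where s2: "y = Inr s2" "s2 \<in> plim (D a) F r" using y unfolding LFa by blast
    have "s1 = s2"
    proof (rule extensionalityI[OF plim_ext[OF s1(2)] plim_ext[OF s2(2)]])
      fix b assume b: "b \<in> D a"
      obtain c where c: "c \<in> D a" "b < c" using exists_between[OF dense b] by blast
      have cn: "c \<noteq> None" "c \<noteq> Some bot" using D_gt_bot[OF b c(2)] by auto
      have cR: "c \<in> R" using R1 c(1) by blast
      have "(\<lambda>b\<in>R. Lres b a x) c = (\<lambda>b\<in>R. Lres b a y) c" using eq by (simp only:)
      then have "Lres c a x = Lres c a y" using cR by simp
      then have "restrict s1 (D c) = restrict s2 (D c)" unfolding s1(1) s2(1) Lres_gt[OF cn] by simp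
      then have "restrict s1 (D c) b = restrict s2 (D c) b" by (simp only:)
      moreover have "b \<in> D c" using b c by simp
      ultimately show "s1 b = s2 b" by simp
    qed
    then show "x = y" using s1 s2 by simp
  qed
  have Ra: "\<forall>c\<in>R. c \<le> a" using R2 by auto
  show "(\<lambda>x. \<lambda>b\<in>R. Lres b a x) ` LF F r a = plim R (LF F r) Lres"
  proof
    show "(\<lambda>x. \<lambda>b\<in>R. Lres b a x) ` LF F r a \<subseteq> plim R (LF F r) Lres"
      using into_plim[OF LF_presheaf Ra] by blast
    show "plim R (LF F r) Lres \<subseteq> (\<lambda>x. \<lambda>b\<in>R. Lres b a x) ` LF F r a"
    proof
      fix t assume t: "t \<in> plim R (LF F r) Lres"
      define s where "s = (\<lambda>b\<in>D a. projr (t (SOME c. c \<in> D a \<and> b < c)) b)"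
      have tD: "t c = Inr (projr (t c)) \<and> projr (t c) \<in> plim (D c) F r"
        if c: "c \<in> D a" "c \<noteq> Some bot" for c
      proof -
        have cR: "c \<in> R" using R1 c by blast
        have cn: "c \<noteq> None" using c(1) by (rule D_not_None)
        have "t c \<in> Inr ` plim (D c) F r" using plim_in[OF t cR] unfolding LF_gt[OF cn c(2)] .
        then show ?thesis by auto
      qed
      have tC: "projr (t c) = restrict (projr (t c')) (D c)"
        if c: "c \<in> D a" "c' \<in> D a" "c \<noteq> Some bot" "c \<le> c'" for c c'
      proof -
        have cn: "c \<noteq> None" using c(1) by (rule D_not_None)
        have c'n: "c' \<noteq> None" "c' \<noteq> Some bot" using ge_not_bot[OF c(4) cn c(3)] by auto
        have "Lres c c' (t c') = t c" using plim_compat[OF t _ _ c(4)] R1 c by blast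
        moreover obtain u where u: "t c' = Inr u" using tD[OF c(2) c'n(2)] by blast
        ultimately have "t c = Inr (restrict u (D c))"
          by (simp add: Lres_gt[OF cn c(3)])
        then show ?thesis using u by simp
      qed
      have K0: "s b = projr (t c) b" if b: "b \<in> D a" and c: "c \<in> D a" "b < c" for b c
      proof -
        define c' where "c' = (SOME c. c \<in> D a \<and> b < c)"
        have c': "c' \<in> D a \<and> b < c'" unfolding c'_def by (rule someI_ex[OF exists_between[OF dense b]])
        have sb: "s b = projr (t c') b" using b unfolding s_def c'_def by simp
        have cn: "c \<noteq> Some bot" using D_gt_bot[OF b c(2)] by auto
        have c'n: "c' \<noteq> Some bot" using D_gt_bot[OF b] c' by auto
        show ?thesis
        proof (cases "c \<le> c'")
          case True
          have "b \<in> D c" using b c by simp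
          then show ?thesis using tC[OF c(1) conjunct1[OF c'] cn True] sb by simp
        next
          case False
          then have "c' \<le> c" by simp
          have "b \<in> D c'" using b c' by simp
          then show ?thesis using tC[OF conjunct1[OF c'] c(1) c'n \<open>c' \<le> c\<close>] sb by simp
        qed
      qed
      have K: "t c = Inr (restrict s (D c))" if c: "c \<in> D a" "c \<noteq> Some bot" for c
      proof -
        have "projr (t c) = restrict s (D c)"
        proof (rule extensionalityI[OF plim_ext[OF conjunct2[OF tD[OF c]]] restrict_extensional])
          fix b assume b: "b \<in> D c"
          have bD: "b \<in> D a" using b c(1) by auto
          have "b < c" using b by simp
          then show "projr (t c) b = restrict s (D c) b" using K0[OF bD c(1)] b by simp
        qed
        then show ?thesis using tD[OF c] by simp
      qed
      have sP: "s \<in> plim (D a) F r"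
      proof (rule plimI)
        show "s \<in> extensional (D a)" unfolding s_def by (rule restrict_extensional)
        fix b assume b: "b \<in> D a"
        obtain c where c: "c \<in> D a" "b < c" using exists_between[OF dense b] by blast
        have cn: "c \<noteq> Some bot" using D_gt_bot[OF b c(2)] by auto
        have bc: "b \<in> D c" using b c by simp
        show "s b \<in> F b" using K0[OF b c] plim_in[OF conjunct2[OF tD[OF c(1) cn]] bc] by simp
        fix b' assume b': "b' \<in> D a" "b' \<le> b"
        have b'c: "b' \<in> D c" using b' c by auto
        have "r b' b (projr (t c) b) = projr (t c) b'"
          using plim_compat[OF conjunct2[OF tD[OF c(1) cn]] bc b'c b'(2)] .
        moreover have "b' < c" using b' c by auto
        ultimately show "r b' b (s b) = s b'" using K0[OF b c] K0[OF b'(1) c(1)] by simp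
      qed
      have "(\<lambda>b\<in>R. Lres b a (Inr s)) = t"
      proof (rule extensionalityI[OF restrict_extensional plim_ext[OF t]])
        fix c assume c: "c \<in> R"
        then have ca: "c < a" using R2 by blast
        show "(\<lambda>b\<in>R. Lres b a (Inr s)) c = t c"
        proof (cases "c = None")
          case True
          have "t c \<in> LF F r None" using plim_in[OF t c] True by simp
          then show ?thesis using c True by simp
        next
          case False
          then have cD: "c \<in> D a" using ca not_None_less by blast
          show ?thesis
          proof (cases "c = Some bot")
            case True
            obtain c' where c': "c' \<in> D a" "c < c'" using exists_between[OF dense cD] by blast
            have c'n: "c' \<noteq> Some bot" using D_gt_bot[OF cD c'(2)] by auto
            have c'R: "c' \<in> R" using R1 c' by blast
            have "Lres c c' (t c') = t c" using plim_compat[OF t c'R c] c'(2) by simp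
            moreover obtain u where u: "t c' = Inr u" using tD[OF c'(1) c'n] by blast
            ultimately have "t c = Inl (projr (t c') (Some bot))" using True by simp
            also have "\<dots> = Inl (s (Some bot))" using K0[OF cD c'] True by simp
            finally show ?thesis using c True by simp
          next
            case nb: False
            show ?thesis using K[OF cD nb] c Lres_gt[OF False nb] by simp
          qed
        qed
      qed
      moreover have "Inr s \<in> LF F r a" using sP unfolding LFa by blast
      ultimately show "t \<in> (\<lambda>x. \<lambda>b\<in>R. Lres b a x) ` LF F r a" by blast
    qed
  qed
qed


lemma LF_sheaf:
  fixes F :: "'a::complete_linorder option \<Rightarrow> 'v set" and r
  assumes dense: "\<forall>x y::'a. x < y \<longrightarrow> (\<exists>z. x < z \<and> z < y)"
  shows "is_sheaf (LF F r) Lres"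
  unfolding is_sheaf_def
proof (intro conjI allI impI)
  show "is_presheaf (LF F r) Lres" by (rule LF_presheaf)
  fix a :: "'a option" and R assume h: "is_sieve a R \<and> Sup R = a"
  show "bij_betw (\<lambda>x. \<lambda>b\<in>R. Lres b a x) (LF F r a) (plim R (LF F r) Lres)"
  proof (cases "a \<in> R")
    case True
    show ?thesis using sheaf_top[OF LF_presheaf _ True] h by blast
  next
    case False
    have Rlt: "R \<subseteq> {c. c < a}"
    proof
      fix b assume b: "b \<in> R"
      then have "b \<le> a" using h by (simp add: is_sieve_def)
      moreover have "b \<noteq> a" using b False by blast
      ultimately show "b \<in> {c. c < a}" by simp
    qed
    show ?thesis
    proof (cases "a = None")
      case True
      have R0: "R = {}" using Rlt True by auto
      have P0: "plim R (LF F r) Lres = {\<lambda>_. undefined}" unfolding R0 plim_def by simp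
      have f0: "(\<lambda>x::('v + ('a option \<Rightarrow> 'v)). \<lambda>b\<in>R. Lres b None x) = (\<lambda>x. \<lambda>_. undefined)" by (simp add: R0 restrict_def fun_eq_iff)
      show ?thesis unfolding P0 True f0 LF_None by (simp add: bij_betw_def)
    next
      case aN: False
      show ?thesis
      proof (cases "a = Some bot")
        case True
        have "\<forall>b\<in>R. b \<le> None"
        proof
          fix b assume "b \<in> R"
          then have "b < Some bot" using Rlt True by blast
          then show "b \<le> None" by (cases b) auto
        qed
        then have "Sup R \<le> None" by (simp add: Sup_least)
        then show ?thesis using h True by simp
      next
        case nb: False
        have DR: "D a \<subseteq> R"
        proof
          fix b assume b: "b \<in> D a"
          show "b \<in> R"
          proof (rule ccontr)
            assume nR: "b \<notin> R"
            have "\<forall>c\<in>R. c \<le> b"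
            proof
              fix c assume c: "c \<in> R"
              show "c \<le> b"
              proof (rule ccontr)
                assume "\<not> c \<le> b"
                then have "b \<le> c" by simp
                then have "b \<in> R" using h c unfolding is_sieve_def by blast
                then show False using nR by blast
              qed
            qed
            then have "Sup R \<le> b" by (simp add: Sup_least)
            moreover have "b < a" using b by simp
            ultimately show False using h by simp
          qed
        qed
        show ?thesis by (rule glue[OF dense aN nb DR Rlt])
      qed
    qed
  qed
qed

definition phi :: "'a::complete_linorder option \<Rightarrow> ('v + ('a option \<Rightarrow> 'v)) \<Rightarrow>
    (('v + ('a option \<Rightarrow> 'v)) + ('a option \<Rightarrow> ('v + ('a option \<Rightarrow> 'v))))" where
  "phi a x = (if a = None then Inr (\<lambda>_. undefined) else if a = Some bot then Inl x
              else Inr (\<lambda>b\<in>D a. Lres b a x))"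

lemma phi_bij:
  fixes F :: "'a::complete_linorder option \<Rightarrow> 'v set" and r
  assumes dense: "\<forall>x y::'a. x < y \<longrightarrow> (\<exists>z. x < z \<and> z < y)"
  shows "bij_betw (phi a) (LF F r a) (LF (LF F r) Lres a)"
proof (cases "a = None")
  case True
  then show ?thesis by (simp add: bij_betw_def phi_def)
next
  case aN: False
  show ?thesis
  proof (cases "a = Some bot")
    case True
    have p: "(phi a :: ('v + ('a option \<Rightarrow> 'v)) \<Rightarrow> _) = Inl" using True by (simp add: phi_def fun_eq_iff)
    have "bij_betw Inl (LF F r a) (Inl ` LF F r a)" by (simp add: bij_betw_def)
    then show ?thesis unfolding p using True by simp
  next
    case nb: False
    have g: "bij_betw (\<lambda>x. \<lambda>b\<in>D a. Lres b a x) (LF F r a) (plim (D a) (LF F r) Lres)"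
      by (rule glue[OF dense aN nb]) auto
    have i: "bij_betw Inr (plim (D a) (LF F r) Lres) (Inr ` plim (D a) (LF F r) Lres)"
      by (simp add: bij_betw_def)
    have "(phi a :: ('v + ('a option \<Rightarrow> 'v)) \<Rightarrow> _) = Inr \<circ> (\<lambda>x. \<lambda>b\<in>D a. Lres b a x)" using aN nb by (simp add: phi_def fun_eq_iff del: not_None_eq)
    moreover have "LF (LF F r) Lres a = Inr ` plim (D a) (LF F r) Lres" using LF_gt[OF aN nb] .
    ultimately show ?thesis using bij_betw_trans[OF g i] by simp
  qed
qed

lemma phi_nat:
  fixes F :: "'a::complete_linorder option \<Rightarrow> 'v set" and r
  assumes ab: "a \<le> b" and x: "x \<in> LF F r b"
  shows "phi a (Lres a b x) = Lres a b (phi b x)"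
proof (cases "a = None")
  case True
  then show ?thesis by (simp add: phi_def)
next
  case aN: False
  have bN: "b \<noteq> None" using ab aN by (cases a; cases b) auto
  show ?thesis
  proof (cases "a = Some bot")
    case True
    show ?thesis
    proof (cases "b = Some bot")
      case True
      then obtain v where "x = Inl v" using x by auto
      then show ?thesis using True \<open>a = Some bot\<close> by (simp add: phi_def)
    next
      case nb: False
      obtain s where s: "x = Inr s" using x unfolding LF_gt[OF bN nb] by blast
      have bD: "Some bot \<in> D b" using bot_in_D[OF bN nb] .
      have "phi b x = Inr (\<lambda>c\<in>D b. Lres c b x)" using bN nb by (simp add: phi_def del: not_None_eq)
      then show ?thesis using True s bD by (simp add: phi_def)
    qed
  next
    case na: False
    have bb: "b \<noteq> None" "b \<noteq> Some bot" using ge_not_bot[OF ab aN na] by auto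
    obtain s where s: "x = Inr s" using x unfolding LF_gt[OF bb] by blast
    have DD: "D a \<subseteq> D b" using ab by (rule D_mono)
    have l: "phi a (Lres a b x) = Inr (\<lambda>c\<in>D a. Lres c a (Inr (restrict s (D a))))"
      using aN na s by (simp add: phi_def Lres_gt del: not_None_eq)
    have rr: "Lres a b (phi b x) = Inr (restrict (\<lambda>c\<in>D b. Lres c b (Inr s)) (D a))"
      using bb aN na s by (simp add: phi_def Lres_gt del: not_None_eq)
    have "(\<lambda>c\<in>D a. Lres c a (Inr (restrict s (D a)))) = restrict (\<lambda>c\<in>D b. Lres c b (Inr s)) (D a)"
    proof (rule extensionalityI[OF restrict_extensional restrict_extensional])
      fix c assume c: "c \<in> D a"
      have cN: "c \<noteq> None" using c by (rule D_not_None)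
      have cb: "c \<in> D b" using c DD by blast
      show "(\<lambda>c\<in>D a. Lres c a (Inr (restrict s (D a)))) c = restrict (\<lambda>c\<in>D b. Lres c b (Inr s)) (D a) c"
      proof (cases "c = Some bot")
        case True
        then show ?thesis using c cb by simp
      next
        case False
        have "D c \<subseteq> D a" using c by auto
        then have "D a \<inter> D c = D c" by blast
        then show ?thesis using c cb by (simp add: Lres_gt[OF cN False] del: not_None_eq)
      qed
    qed
    then show ?thesis using l rr by simp
  qed
qed

theorem lemma22:
  fixes F :: "'a::complete_linorder option \<Rightarrow> 'v set"
    and r :: "'a option \<Rightarrow> 'a option \<Rightarrow> 'v \<Rightarrow> 'v"
  assumes dense: "\<forall>x y::'a. x < y \<longrightarrow> (\<exists>z. x < z \<and> z < y)"
    and mono: "mono_presheaf F r"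
  shows "mono_sheaf (LF F r) Lres \<and>
         (\<exists>\<phi>. presheaf_iso (LF F r) Lres (LF (LF F r) Lres) Lres \<phi>)"
proof
  show "mono_sheaf (LF F r) Lres" unfolding mono_sheaf_def
    using LF_sheaf[OF dense] LF_mono[OF mono] by blast
  have "presheaf_iso (LF F r) Lres (LF (LF F r) Lres) Lres phi"
    unfolding presheaf_iso_def using phi_bij[OF dense] phi_nat by blast
  then show "\<exists>\<phi>. presheaf_iso (LF F r) Lres (LF (LF F r) Lres) Lres \<phi>" by blast
qed

end
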